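(* Let $A$ be a first countable locally convex topological vector space over $\mathbb C$, give $A^\vee$ the topology of uniform convergence on compact sets, and let $K\subset A^\vee$ be compact. Then $\bigcup_{\phi\in K}\ker\phi$ is closed in $A$.
   Context: $A^\vee$ is the space of continuous linear functionals on $A$, with subbasis $\{\phi:\phi(C)\subset U\}$, $C\subset A$ compact, $U\subset\mathbb C$ open. *)

theory Defs
  imports "HOL-Analysis.Analysis"
begin

definition complex_tvs :: "(complex \<Rightarrow> 'a::{ab_group_add,topological_space} \<Rightarrow> 'a) \<Rightarrow> bool" where
  "complex_tvs smult_c \<longleftrightarrow>
     Vector_Spaces.vector_space smult_c \<and>
     continuous_on UNIV (\<lambda>(x::'a, y::'a). x + y) \<and>
     continuous_on UNIV (\<lambda>(c::complex, x::'a). smult_c c x)"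

definition convex_wrt :: "(complex \<Rightarrow> 'a::ab_group_add \<Rightarrow> 'a) \<Rightarrow> 'a set \<Rightarrow> bool" where
  "convex_wrt smult_c V \<longleftrightarrow>
     (\<forall>x\<in>V. \<forall>y\<in>V. \<forall>t::real. 0 \<le> t \<and> t \<le> 1 \<longrightarrow>
        smult_c (complex_of_real t) x + smult_c (complex_of_real (1 - t)) y \<in> V)"

definition locally_convex :: "(complex \<Rightarrow> 'a::{ab_group_add,topological_space} \<Rightarrow> 'a) \<Rightarrow> bool" where
  "locally_convex smult_c \<longleftrightarrow>
     (\<forall>U. open U \<and> 0 \<in> U \<longrightarrow> (\<exists>V. open V \<and> 0 \<in> V \<and> V \<subseteq> U \<and> convex_wrt smult_c V))"

definition cdual :: "(complex \<Rightarrow> 'a::{ab_group_add,topological_space} \<Rightarrow> 'a) \<Rightarrow> ('a \<Rightarrow> complex) set" where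
  "cdual smult_c = {\<phi>. Vector_Spaces.linear smult_c (*) \<phi> \<and> continuous_on UNIV \<phi>}"

text \<open>Topology of uniform convergence on compact sets (compact-open topology) on A^\<or>,
  generated by the subbasis {\<phi> \<in> A^\<or>. \<phi>(C) \<subseteq> U}, C compact, U open.\<close>
definition dual_topology :: "(complex \<Rightarrow> 'a::{ab_group_add,topological_space} \<Rightarrow> 'a) \<Rightarrow> ('a \<Rightarrow> complex) topology" where
  "dual_topology smult_c = subtopology
     (topology_generated_by {{\<phi> \<in> cdual smult_c. \<phi> ` C \<subseteq> U} | C U. compact C \<and> open U})
     (cdual smult_c)"

end

theory Submission
  imports Defs
begin

lemma compact_seq_lim_gen:
  fixes s :: "nat \<Rightarrow> 'a::topological_space"
  assumes "s \<longlonglongrightarrow> l"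
  shows "compact (insert l (range s))"
proof -
  have "limitin euclidean s l sequentially"
    using assms by (simp add: limitin_canonical_iff)
  then have "compactin euclidean (insert l (range s))"
    by (rule compactin_sequence_with_limit) auto
  then show ?thesis by simp
qed

theorem lemma7p9:
  fixes smult_c :: "complex \<Rightarrow> 'a::{ab_group_add,first_countable_topology} \<Rightarrow> 'a"
    and K :: "('a \<Rightarrow> complex) set"
  assumes "complex_tvs smult_c"
    and "locally_convex smult_c"
    and "K \<subseteq> cdual smult_c"
    and "compactin (dual_topology smult_c) K"
  shows "closed (\<Union>\<phi>\<in>K. {x. \<phi> x = 0})"
proof -
  let ?B = "{{\<phi> \<in> cdual smult_c. \<phi> ` C \<subseteq> U} | C U. compact C \<and> open U}"
  have cK: "compactin (topology_generated_by ?B) K"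
    using assms(4) unfolding dual_topology_def compactin_subtopology by blast
  show ?thesis
    unfolding closed_sequential_limits
  proof (intro allI impI)
    fix s l
    assume h: "(\<forall>n. s n \<in> (\<Union>\<phi>\<in>K. {x. \<phi> x = 0})) \<and> s \<longlonglongrightarrow> l"
    then have lim: "s \<longlonglongrightarrow> l" by blast
    from h have "\<forall>n. \<exists>\<phi>\<in>K. \<phi> (s n) = 0" by blast
    then obtain f where f: "\<And>n. f n \<in> K" "\<And>n. f n (s n) = 0" by metis
    show "l \<in> (\<Union>\<phi>\<in>K. {x. \<phi> x = 0})"
    proof (rule ccontr)
      assume "l \<notin> (\<Union>\<phi>\<in>K. {x. \<phi> x = 0})"
      then have nz: "\<And>\<phi>. \<phi> \<in> K \<Longrightarrow> \<phi> l \<noteq> 0" by blast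
      have "\<exists>N. \<forall>n\<ge>N. \<phi> (s n) \<noteq> 0" if "\<phi> \<in> K" for \<phi>
      proof -
        have "continuous_on UNIV \<phi>" using assms(3) that by (auto simp: cdual_def)
        then have "(\<lambda>n. \<phi> (s n)) \<longlonglongrightarrow> \<phi> l"
          using lim by (rule continuous_on_tendsto_compose) auto
        then have "eventually (\<lambda>n. \<phi> (s n) \<noteq> 0) sequentially"
          using nz[OF that] by (rule tendsto_imp_eventually_ne)
        then show ?thesis by (simp add: eventually_sequentially)
      qed
      then have "\<forall>\<phi>. \<exists>N. \<phi> \<in> K \<longrightarrow> (\<forall>n\<ge>N. \<phi> (s n) \<noteq> 0)" by blast
      then obtain N where N0: "\<forall>\<phi>. \<phi> \<in> K \<longrightarrow> (\<forall>n\<ge>N \<phi>. \<phi> (s n) \<noteq> 0)"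
        by (rule choice[THEN exE]) 
      have N: "\<And>\<phi> n. \<phi> \<in> K \<Longrightarrow> n \<ge> N \<phi> \<Longrightarrow> \<phi> (s n) \<noteq> 0" using N0 by blast
      define W where "W \<phi> = {\<psi> \<in> cdual smult_c. \<psi> ` insert l (range (\<lambda>n. s (n + N \<phi>))) \<subseteq> - {0}}" for \<phi>
      have Wopen: "openin (topology_generated_by ?B) (W \<phi>)" for \<phi>
      proof (rule topology_generated_by_Basis)
        have "compact (insert l (range (\<lambda>n. s (n + N \<phi>))))"
          by (rule compact_seq_lim_gen) (rule LIMSEQ_ignore_initial_segment[OF lim])
        moreover have "open (- {0::complex})" by (simp add: open_Compl)
        ultimately show "W \<phi> \<in> ?B" unfolding W_def by (intro CollectI exI conjI) simp_all
      qed
      have cov: "K \<subseteq> \<Union> (W ` K)"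
      proof
        fix \<phi> assume p: "\<phi> \<in> K"
        have "\<phi> \<in> W \<phi>" unfolding W_def using assms(3) p nz[OF p] N[OF p] by auto
        then show "\<phi> \<in> \<Union> (W ` K)" using p by blast
      qed
      have "\<forall>U\<in>W ` K. openin (topology_generated_by ?B) U" using Wopen by blast
      then obtain F where F: "finite F" "F \<subseteq> W ` K" "K \<subseteq> \<Union> F"
        using cK cov unfolding compactin_def by (elim conjE allE[where x="W ` K"]) blast
      then obtain G where G: "G \<subseteq> K" "finite G" "F = W ` G"
        by (meson finite_subset_image)
      define M where "M = (\<Sum>\<phi>\<in>G. N \<phi>)"
      have "f M \<in> \<Union> (W ` G)" using F G f(1) by blast
      then obtain \<phi> where p: "\<phi> \<in> G" "f M \<in> W \<phi>" by blast
      have le: "N \<phi> \<le> M" unfolding M_def using G p(1) by (intro member_le_sum) auto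
      have "s M \<in> insert l (range (\<lambda>n. s (n + N \<phi>)))"
        using le by (auto intro: image_eqI[where x="M - N \<phi>"])
      then have "f M (s M) \<noteq> 0" using p(2) unfolding W_def by blast
      then show False using f(2) by blast
    qed
  qed
qed

end
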